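(* Let $\tilde{N}$, $N_1$, $N_2$ be real symmetric $n\times n$ matrices with spectral norm at most $1$, and suppose that $N_1$ is positive semidefinite and commutes with $N_2$. If $I-\tilde{N}\approx_{\epsilon}I-N_1$ (with $\epsilon\ge 0$), then \[ I-\tfrac{1}{2}(\tilde{N}N_2+N_2\tilde{N})\approx_{\epsilon}I-N_2N_1. \]
   Context: For real symmetric $X,Y$ and $\epsilon\ge0$, $X\approx_\epsilon Y$ means $(1-\epsilon)v^TYv\le v^TXv\le(1+\epsilon)v^TYv$ for all $v\in\mathbb{R}^n$. *)

theory Defs
  imports "HOL-Analysis.Analysis"
begin

definition spec_approx :: "real ^'n^'n \<Rightarrow> real \<Rightarrow> real ^'n^'n \<Rightarrow> bool" where
  "spec_approx X eps Y \<longleftrightarrow>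
     (\<forall>v::real^'n. (1 - eps) * (v \<bullet> (Y *v v)) \<le> v \<bullet> (X *v v)
                 \<and> v \<bullet> (X *v v) \<le> (1 + eps) * (v \<bullet> (Y *v v)))"

definition symmetric_mat :: "real ^'n^'n \<Rightarrow> bool" where
  "symmetric_mat A \<longleftrightarrow> transpose A = A"

definition psd_mat :: "real ^'n^'n \<Rightarrow> bool" where
  "psd_mat A \<longleftrightarrow> symmetric_mat A \<and> (\<forall>v::real^'n. 0 \<le> v \<bullet> (A *v v))"

definition spectral_norm :: "real ^'n^'n \<Rightarrow> real" where
  "spectral_norm A = onorm (\<lambda>x::real^'n. A *v x)"

end

theory Submission
  imports Defs
begin

lemma sym_dot:
  fixes A :: "real^'n^'n"
  assumes "transpose A = A"
  shows "x \<bullet> (A *v y) = (A *v x) \<bullet> y"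
proof -
  have "x \<bullet> (A *v y) = (x v* A) \<bullet> y" by (simp add: dot_lmul_matrix)
  also have "x v* A = A *v x" by (metis assms vector_transpose_matrix)
  finally show ?thesis .
qed

lemma norm_le:
  fixes A :: "real^'n^'n"
  assumes "spectral_norm A \<le> 1"
  shows "(A *v v) \<bullet> (A *v v) \<le> v \<bullet> v"
proof -
  have "norm (A *v v) \<le> spectral_norm A * norm v"
    unfolding spectral_norm_def by (rule onorm) simp
  also have "\<dots> \<le> norm v" using mult_right_mono[OF assms norm_ge_zero[of v]] by simp
  finally have "norm (A *v v) \<le> norm v" .
  hence "norm (A *v v)^2 \<le> norm v ^2" by (simp add: power_mono)
  thus ?thesis by (simp add: power2_norm_eq_inner)
qed

theorem mainTheorem8:
  fixes Nt N1 N2 :: "real ^'n^'n" and eps :: real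
  assumes "symmetric_mat Nt" and "symmetric_mat N1" and "symmetric_mat N2"
    and "spectral_norm Nt \<le> 1" and "spectral_norm N1 \<le> 1" and "spectral_norm N2 \<le> 1"
    and "psd_mat N1"
    and "N1 ** N2 = N2 ** N1"
    and "eps \<ge> 0"
    and "spec_approx (mat 1 - Nt) eps (mat 1 - N1)"
  shows "spec_approx (mat 1 - (1/2) *\<^sub>R (Nt ** N2 + N2 ** Nt)) eps (mat 1 - N2 ** N1)"
  unfolding spec_approx_def
proof
  fix v :: "real^'n"
  have sT: "transpose Nt = Nt" and s1: "transpose N1 = N1" and s2: "transpose N2 = N2"
    using assms(1-3) by (auto simp: symmetric_mat_def)
  have psd: "\<And>z. 0 \<le> z \<bullet> (N1 *v z)" using assms(7) by (simp add: psd_mat_def)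
  have H: "\<And>z. \<bar>z \<bullet> (Nt *v z) - z \<bullet> (N1 *v z)\<bar> \<le> eps * (z \<bullet> z - z \<bullet> (N1 *v z))"
  proof -
    fix z :: "real^'n"
    have "(1 - eps) * (z \<bullet> ((mat 1 - N1) *v z)) \<le> z \<bullet> ((mat 1 - Nt) *v z)
          \<and> z \<bullet> ((mat 1 - Nt) *v z) \<le> (1 + eps) * (z \<bullet> ((mat 1 - N1) *v z))"
      using assms(10) by (simp add: spec_approx_def)
    thus "\<bar>z \<bullet> (Nt *v z) - z \<bullet> (N1 *v z)\<bar> \<le> eps * (z \<bullet> z - z \<bullet> (N1 *v z))"
      by (simp add: matrix_vector_mult_diff_rdistrib inner_diff_right algebra_simps)
         (smt (verit))
  qed
  define w where "w = N2 *v v"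
  define e where "e = (\<lambda>x y. x \<bullet> (Nt *v y) - x \<bullet> (N1 *v y))"
  define a where "a = (\<lambda>x y. x \<bullet> y - x \<bullet> (N1 *v y))"
  have esym: "e w v = e v w" unfolding e_def using sym_dot[OF sT] sym_dot[OF s1]
    by (metis inner_commute)
  have asym: "a w v = a v w" unfolding a_def using sym_dot[OF s1]
    by (metis inner_commute)
  have epl: "e (v+w) (v+w) = e v v + 2 * e v w + e w w"
    using esym unfolding e_def by (simp add: algebra_simps inner_add_left inner_add_right)
  have emi: "e (v-w) (v-w) = e v v - 2 * e v w + e w w"
    using esym unfolding e_def by (simp add: algebra_simps inner_diff_left inner_diff_right)
  have apl: "a (v+w) (v+w) = a v v + 2 * a v w + a w w"
    using asym unfolding a_def by (simp add: algebra_simps inner_add_left inner_add_right)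
  have ami: "a (v-w) (v-w) = a v v - 2 * a v w + a w w"
    using asym unfolding a_def by (simp add: algebra_simps inner_diff_left inner_diff_right)
  have H1: "\<bar>e (v+w) (v+w)\<bar> \<le> eps * a (v+w) (v+w)" using H unfolding e_def a_def by blast
  have H2: "\<bar>e (v-w) (v-w)\<bar> \<le> eps * a (v-w) (v-w)" using H unfolding e_def a_def by blast
  have key: "\<bar>e v w\<bar> \<le> eps * (a v v + a w w) / 2"
  proof -
    have H1': "\<bar>e v v + 2 * e v w + e w w\<bar> \<le> (eps * a v v + eps * a w w) + 2 * (eps * a v w)"
      using H1 epl apl by (simp add: algebra_simps)
    have H2': "\<bar>e v v - 2 * e v w + e w w\<bar> \<le> (eps * a v v + eps * a w w) - 2 * (eps * a v w)"
      using H2 emi ami by (simp add: algebra_simps)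
    have "\<bar>e v w\<bar> \<le> (eps * a v v + eps * a w w) / 2"
    proof -
      have L: "\<And>p q r S T::real. \<bar>p + 2 * q + r\<bar> \<le> S + 2 * T \<Longrightarrow>
          \<bar>p - 2 * q + r\<bar> \<le> S - 2 * T \<Longrightarrow> \<bar>q\<bar> \<le> S / 2" by linarith
      have "\<bar>e v w\<bar> \<le> (eps * a v v + eps * a w w) / 2"
        by (rule L[OF H1' H2'])
      thus ?thesis .
    qed
    thus ?thesis by (simp add: algebra_simps)
  qed
  have p: "0 \<le> (v - w) \<bullet> (N1 *v (v - w))" by (rule psd)
  have pe: "(v - w) \<bullet> (N1 *v (v - w)) = v \<bullet> (N1 *v v) - 2 * (v \<bullet> (N1 *v w)) + w \<bullet> (N1 *v w)"
    using sym_dot[OF s1, of w v] by (simp add: algebra_simps inner_diff_left inner_diff_right inner_commute)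
  have nw: "w \<bullet> w \<le> v \<bullet> v" unfolding w_def by (rule norm_le[OF assms(6)])
  define Y where "Y = v \<bullet> v - v \<bullet> (N1 *v w)"
  have aY: "(a v v + a w w) / 2 \<le> Y" using p pe nw unfolding a_def Y_def by simp
  have Yv: "v \<bullet> ((mat 1 - N2 ** N1) *v v) = Y"
  proof -
    have "v \<bullet> ((N2 ** N1) *v v) = v \<bullet> (N2 *v (N1 *v v))" by (simp add: matrix_vector_mul_assoc)
    also have "\<dots> = w \<bullet> (N1 *v v)" unfolding w_def by (rule sym_dot[OF s2])
    also have "\<dots> = v \<bullet> (N1 *v w)" by (metis sym_dot[OF s1] inner_commute)
    finally show ?thesis unfolding Y_def by (simp add: matrix_vector_mult_diff_rdistrib inner_diff_right)
  qed
  have Xv: "v \<bullet> ((mat 1 - (1/2) *\<^sub>R (Nt ** N2 + N2 ** Nt)) *v v) = Y - e v w"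
  proof -
    have 1: "v \<bullet> ((Nt ** N2) *v v) = v \<bullet> (Nt *v w)" unfolding w_def by (simp add: matrix_vector_mul_assoc)
    have "v \<bullet> ((N2 ** Nt) *v v) = v \<bullet> (N2 *v (Nt *v v))" by (simp add: matrix_vector_mul_assoc)
    also have "\<dots> = w \<bullet> (Nt *v v)" unfolding w_def by (rule sym_dot[OF s2])
    also have "\<dots> = v \<bullet> (Nt *v w)" by (metis sym_dot[OF sT] inner_commute)
    finally have 2: "v \<bullet> ((N2 ** Nt) *v v) = v \<bullet> (Nt *v w)" .
    have "v \<bullet> ((mat 1 - (1/2) *\<^sub>R (Nt ** N2 + N2 ** Nt)) *v v)
        = v \<bullet> v - (1/2) * (v \<bullet> ((Nt ** N2) *v v) + v \<bullet> ((N2 ** Nt) *v v))"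
      by (simp add: matrix_vector_mult_diff_rdistrib matrix_vector_mult_add_rdistrib
          inner_diff_right inner_add_right flip: scaleR_matrix_vector_assoc)
    thus ?thesis using 1 2 unfolding Y_def e_def by simp
  qed
  have "\<bar>e v w\<bar> \<le> eps * Y"
    using key aY assms(9) by (smt (verit) mult_left_mono times_divide_eq_right)
  thus "(1 - eps) * (v \<bullet> ((mat 1 - N2 ** N1) *v v)) \<le> v \<bullet> ((mat 1 - (1/2) *\<^sub>R (Nt ** N2 + N2 ** Nt)) *v v) \<and>
        v \<bullet> ((mat 1 - (1/2) *\<^sub>R (Nt ** N2 + N2 ** Nt)) *v v) \<le> (1 + eps) * (v \<bullet> ((mat 1 - N2 ** N1) *v v))"
    unfolding Xv Yv by (simp add: abs_le_iff algebra_simps)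
qed

end
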